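(* Fix constants $\lambda_1,\ldots,\lambda_K\ge 0$ and $\Gamma^{\rm ST}_1,\ldots,\Gamma^{\rm ST}_M>0$. For a channel realization $\boldsymbol{\alpha}$ consider the problem $$\max_{p_1,\ldots,p_K}\ \log\Big(1+\sum_{k=1}^K h_kp_k\Big)-\sum_{k=1}^K\lambda_kp_k\quad\text{s.t.}\quad \sum_{k=1}^K g_{km}p_k\le\Gamma_m^{\rm ST}\ \ \forall m,\qquad p_k\ge 0\ \ \forall k.$$ For almost every realization $\boldsymbol{\alpha}$: this problem has an optimal solution in which at most one user (user $i$) has positive power and all other users have zero power if and only if there is a user $i$ which, with $m'=\arg\min_{m\in\{1,\ldots,M\}}\Gamma_m^{\rm ST}/g_{im}$, satisfies one of the following two sets of conditions: (a) $\frac{1}{\lambda_i}-\frac{1}{h_i}\le\frac{\Gamma_{m'}^{\rm ST}}{g_{im'}}$ and $\frac{h_i}{\lambda_i}\ge\frac{h_j}{\lambda_j}$ for all $j\ne i$; in this case the optimal power of user $i$ is $p_i^*=\big(\frac{1}{\lambda_i}-\frac{1}{h_i}\big)^+$; (b) $\frac{1}{\lambda_i}-\frac{1}{h_i}>\frac{\Gamma_{m'}^{\rm ST}}{g_{im'}}$ and $\left(h_jg_{im'}-h_ig_{jm'}\right)\frac{g_{im'}}{g_{im'}+h_i\Gamma_{m'}^{\rm ST}}\le \lambda_jg_{im'}-\lambda_ig_{jm'}$ for all $j\neq i$; in this case $p_i^*=\frac{\Gamma_{m'}^{\rm ST}}{g_{im'}}$.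
   Context: $\boldsymbol{\alpha}=(h_1,\ldots,h_K,g_{11},\ldots,g_{KM})$ is a random vector of nonnegative channel power gains ($h_k$: secondary user $k$ to secondary base station; $g_{km}$: secondary user $k$ to primary receiver $m$) with a continuous, differentiable joint cumulative distribution function, the $h_k$'s and $g_{km}$'s being independent. This per-fading-state problem arises (with $\lambda_k$ the Lagrange multipliers of long-term transmit-power constraints) in maximizing the ergodic sum rate of the fading cognitive multiple-access channel under long-term transmit-power and short-term interference-power constraints. Convention: $1/0=+\infty$ and $x/0=+\infty$ for $x>0$. $(x)^+=\max(0,x)$. *)

theory Defs
  imports "HOL-Probability.Probability"
begin

text \<open>Extended-real division with the paper's convention x/0 = +infinity for x > 0
  (in particular 1/0 = +infinity). The case 0/0 only arises on a null set of channel
  realizations and is fixed arbitrarily to 0.\<close>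
definition ediv :: "real \<Rightarrow> real \<Rightarrow> ereal" where
  "ediv x y = (if y = 0 then (if x > 0 then \<infinity> else 0) else ereal (x / y))"

definition einv :: "real \<Rightarrow> ereal" where
  "einv x = ediv 1 x"

definition obj :: "real^'k \<Rightarrow> ('k::finite \<Rightarrow> real) \<Rightarrow> ('k \<Rightarrow> real) \<Rightarrow> real" where
  "obj h lam p = ln (1 + (\<Sum>k\<in>UNIV. h $ k * p k)) - (\<Sum>k\<in>UNIV. lam k * p k)"

definition feasible :: "real^'m^'k \<Rightarrow> ('m::finite \<Rightarrow> real) \<Rightarrow> ('k::finite \<Rightarrow> real) \<Rightarrow> bool" where
  "feasible g Gam p \<longleftrightarrow> (\<forall>k. p k \<ge> 0) \<and> (\<forall>m. (\<Sum>k\<in>UNIV. g $ k $ m * p k) \<le> Gam m)"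

definition optimal :: "real^'k \<Rightarrow> real^'m^'k \<Rightarrow> ('k::finite \<Rightarrow> real) \<Rightarrow> ('m::finite \<Rightarrow> real)
    \<Rightarrow> ('k \<Rightarrow> real) \<Rightarrow> bool" where
  "optimal h g lam Gam p \<longleftrightarrow> feasible g Gam p \<and> (\<forall>q. feasible g Gam q \<longrightarrow> obj h lam q \<le> obj h lam p)"

definition single :: "'k \<Rightarrow> real \<Rightarrow> 'k \<Rightarrow> real" where
  "single i c = (\<lambda>k. if k = i then c else 0)"

definition is_argmin_ratio :: "real^'m^'k \<Rightarrow> ('m::finite \<Rightarrow> real) \<Rightarrow> 'k::finite \<Rightarrow> 'm \<Rightarrow> bool" where
  "is_argmin_ratio g Gam i m' \<longleftrightarrow> (\<forall>m. ediv (Gam m') (g $ i $ m') \<le> ediv (Gam m) (g $ i $ m))"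

definition condA :: "real^'k \<Rightarrow> real^'m^'k \<Rightarrow> ('k::finite \<Rightarrow> real) \<Rightarrow> ('m::finite \<Rightarrow> real) \<Rightarrow> 'k \<Rightarrow> 'm \<Rightarrow> bool" where
  "condA h g lam Gam i m' \<longleftrightarrow>
     einv (lam i) - einv (h $ i) \<le> ediv (Gam m') (g $ i $ m') \<and>
     (\<forall>j. j \<noteq> i \<longrightarrow> ediv (h $ i) (lam i) \<ge> ediv (h $ j) (lam j))"

definition condB :: "real^'k \<Rightarrow> real^'m^'k \<Rightarrow> ('k::finite \<Rightarrow> real) \<Rightarrow> ('m::finite \<Rightarrow> real) \<Rightarrow> 'k \<Rightarrow> 'm \<Rightarrow> bool" where
  "condB h g lam Gam i m' \<longleftrightarrow>
     einv (lam i) - einv (h $ i) > ediv (Gam m') (g $ i $ m') \<and>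
     (\<forall>j. j \<noteq> i \<longrightarrow>
        (h $ j * g $ i $ m' - h $ i * g $ j $ m') * (g $ i $ m' / (g $ i $ m' + h $ i * Gam m'))
          \<le> lam j * g $ i $ m' - lam i * g $ j $ m')"

end

theory Submission
  imports Defs
begin


lemma hyp_AE:
  fixes \<mu> :: "('a::euclidean_space) measure" and a :: 'a
  assumes "absolutely_continuous lborel \<mu>" and "a \<noteq> 0"
  shows "AE x in \<mu>. a \<bullet> x \<noteq> 0"
proof -
  have "negligible {x. a \<bullet> x = 0}" using assms(2) negligible_hyperplane by blast
  hence "{x. a \<bullet> x = 0} \<in> null_sets lebesgue" by (simp add: negligible_iff_null_sets)
  moreover have "{x::'a. a \<bullet> x = 0} \<in> sets lborel"
    by (simp add: borel_closed closed_hyperplane)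
  ultimately have "{x. a \<bullet> x = 0} \<in> null_sets lborel"
    using null_sets_completion_iff by blast
  hence "{x. a \<bullet> x = 0} \<in> null_sets \<mu>" using assms(1) by (auto simp: absolutely_continuous_def)
  from AE_not_in[OF this] show ?thesis by simp
qed

lemma inner_h:
  fixes x :: "(real^'k::finite) \<times> (real^'m::finite^'k)"
  shows "(axis k 1, 0) \<bullet> x = fst x $ k"
  by (cases x) (simp add: inner_axis')

lemma inner_g:
  fixes x :: "(real^'k::finite) \<times> (real^'m::finite^'k)"
  shows "((0::real^'k), axis k (axis m a - axis n b)) \<bullet> x = a * snd x $ k $ m - b * snd x $ k $ n"
  by (cases x) (simp add: inner_axis' inner_diff_left)



definition SS :: "real^'k \<Rightarrow> ('k::finite \<Rightarrow> real) \<Rightarrow> real" where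
  "SS h p = 1 + (\<Sum>k\<in>UNIV. h $ k * p k)"

definition DD :: "real^'k \<Rightarrow> ('k::finite \<Rightarrow> real) \<Rightarrow> ('k \<Rightarrow> real) \<Rightarrow> 'k \<Rightarrow> real" where
  "DD h lam p k = h $ k / SS h p - lam k"

lemma SS_ge1: "\<forall>k. h $ k \<ge> 0 \<Longrightarrow> \<forall>k. p k \<ge> 0 \<Longrightarrow> SS h p \<ge> 1"
  unfolding SS_def by (simp add: sum_nonneg)

lemma sum_DD: "(\<Sum>k\<in>UNIV. DD h lam p k * d k) = (\<Sum>k\<in>UNIV. h $ k * d k) / SS h p - (\<Sum>k\<in>UNIV. lam k * d k)"
  unfolding DD_def by (simp add: left_diff_distrib sum_subtractf sum_divide_distrib)

lemma suff:
  assumes hnn: "\<forall>k. h $ k \<ge> 0" and fp: "feasible g Gam p"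
    and H: "\<forall>q. feasible g Gam q \<longrightarrow> (\<Sum>k\<in>UNIV. DD h lam p k * (q k - p k)) \<le> 0"
  shows "optimal h g lam Gam p"
  unfolding optimal_def
proof (intro conjI allI impI fp)
  fix q assume fq: "feasible g Gam q"
  have s1: "SS h p \<ge> 1" using SS_ge1 hnn fp by (auto simp: feasible_def)
  have u1: "SS h q \<ge> 1" using SS_ge1 hnn fq by (auto simp: feasible_def)
  have "ln (SS h q) - ln (SS h p) = ln (SS h q / SS h p)" using s1 u1 by (simp add: ln_div)
  also have "\<dots> \<le> SS h q / SS h p - 1" using s1 u1 by (intro ln_le_minus_one) simp
  also have "\<dots> = (\<Sum>k\<in>UNIV. h $ k * (q k - p k)) / SS h p"
    using s1 by (simp add: SS_def field_simps right_diff_distrib sum_subtractf)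
  finally have 1: "ln (SS h q) - ln (SS h p) \<le> (\<Sum>k\<in>UNIV. h $ k * (q k - p k)) / SS h p" .
  have "(\<Sum>k\<in>UNIV. DD h lam p k * (q k - p k)) \<le> 0" using H fq by blast
  hence "(\<Sum>k\<in>UNIV. h $ k * (q k - p k)) / SS h p - (\<Sum>k\<in>UNIV. lam k * (q k - p k)) \<le> 0"
    by (simp add: sum_DD)
  with 1 show "obj h lam q \<le> obj h lam p"
    unfolding obj_def SS_def[symmetric] by (simp add: right_diff_distrib sum_subtractf)
qed

lemma nec:
  assumes hnn: "\<forall>k. h $ k \<ge> 0" and opt: "optimal h g lam Gam p"
    and ev: "eventually (\<lambda>t. feasible g Gam (\<lambda>k. p k + t * d k)) (at_right 0)"
  shows "(\<Sum>k\<in>UNIV. DD h lam p k * d k) \<le> 0"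
proof (rule ccontr)
  assume N: "\<not> ?thesis"
  define s where "s = SS h p"
  define b where "b = (\<Sum>k\<in>UNIV. h $ k * d k)"
  define l where "l = (\<Sum>k\<in>UNIV. lam k * d k)"
  have X: "b / s - l > 0" using N by (simp add: sum_DD s_def b_def l_def)
  have fp: "feasible g Gam p" using opt by (simp add: optimal_def)
  have s1: "s \<ge> 1" using SS_ge1 hnn fp by (auto simp: feasible_def s_def)
  have "((\<lambda>t. b / (s + t * b) - l) \<longlongrightarrow> b / (s + 0 * b) - l) (at_right 0)"
    using s1 by (intro tendsto_intros) auto
  hence "((\<lambda>t. b / (s + t * b) - l) \<longlongrightarrow> b / s - l) (at_right 0)" by simp
  hence e1: "eventually (\<lambda>t. b / (s + t * b) - l > 0) (at_right 0)"
    using X order_tendstoD(1) by blast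
  have e2: "eventually (\<lambda>t::real. t > 0) (at_right 0)" by (simp add: eventually_at_right_less)
  have "eventually (\<lambda>t. False) (at_right (0::real))"
    using e1 e2 ev
  proof eventually_elim
    case (elim t)
    let ?q = "\<lambda>k. p k + t * d k"
    have u1: "SS h ?q \<ge> 1" using SS_ge1 hnn elim(3) by (auto simp: feasible_def)
    have Sq: "SS h ?q = s + t * b"
      by (simp add: SS_def s_def b_def algebra_simps sum.distrib sum_distrib_left)
    have lq: "(\<Sum>k\<in>UNIV. lam k * ?q k) = (\<Sum>k\<in>UNIV. lam k * p k) + t * l"
      by (simp add: l_def algebra_simps sum.distrib sum_distrib_left)
    have "ln (SS h ?q) - ln s = - ln (s / SS h ?q)" using s1 u1 by (simp add: ln_div)
    also have "\<dots> \<ge> - (s / SS h ?q - 1)"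
    proof -
      have "ln (s / SS h ?q) \<le> s / SS h ?q - 1" using s1 u1 by (intro ln_le_minus_one) simp
      thus ?thesis by linarith
    qed
    finally have "ln (SS h ?q) - ln s \<ge> 1 - s / (s + t * b)" using Sq by simp
    also have "1 - s / (s + t * b) = t * (b / (s + t * b))" using u1 Sq
      by (simp add: field_simps)
    finally have "ln (SS h ?q) - ln s - t * l \<ge> t * (b / (s + t * b) - l)"
      by (simp add: right_diff_distrib)
    moreover have "t * (b / (s + t * b) - l) > 0" using elim by simp
    ultimately have "obj h lam ?q > obj h lam p"
      unfolding obj_def using lq by (simp add: SS_def[symmetric] s_def)
    moreover have "obj h lam ?q \<le> obj h lam p" using opt elim(3) by (simp add: optimal_def)
    ultimately show False by simp
  qed
  thus False by (simp add: trivial_limit_at_right_real)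
qed

lemma feas_ev:
  assumes fp: "feasible g Gam p"
    and dk: "\<forall>k. d k \<ge> 0 \<or> p k > 0"
    and cm: "\<forall>m. (\<Sum>k\<in>UNIV. g $ k $ m * p k) < Gam m \<or> (\<Sum>k\<in>UNIV. g $ k $ m * d k) \<le> 0"
  shows "eventually (\<lambda>t. feasible g Gam (\<lambda>k. p k + t * d k)) (at_right 0)"
proof -
  have e2: "eventually (\<lambda>t::real. t > 0) (at_right 0)" by (simp add: eventually_at_right_less)
  have A: "eventually (\<lambda>t. p k + t * d k \<ge> 0) (at_right 0)" for k
  proof (cases "d k \<ge> 0")
    case True
    show ?thesis using e2 by eventually_elim (use True fp in \<open>auto simp: feasible_def\<close>)
  next
    case False
    hence pk: "p k > 0" using dk by auto
    have "((\<lambda>t. p k + t * d k) \<longlongrightarrow> p k + 0 * d k) (at_right 0)" by (intro tendsto_intros)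
    hence "eventually (\<lambda>t. p k + t * d k > 0) (at_right 0)"
      using pk order_tendstoD(1) by fastforce
    thus ?thesis by eventually_elim simp
  qed
  have B: "eventually (\<lambda>t. (\<Sum>k\<in>UNIV. g $ k $ m * (p k + t * d k)) \<le> Gam m) (at_right 0)" for m
  proof -
    have eq: "(\<Sum>k\<in>UNIV. g $ k $ m * (p k + t * d k)) =
      (\<Sum>k\<in>UNIV. g $ k $ m * p k) + t * (\<Sum>k\<in>UNIV. g $ k $ m * d k)" for t
      by (simp add: algebra_simps sum.distrib sum_distrib_left)
    show ?thesis
    proof (cases "(\<Sum>k\<in>UNIV. g $ k $ m * p k) < Gam m")
      case True
      have "((\<lambda>t. (\<Sum>k\<in>UNIV. g $ k $ m * p k) + t * (\<Sum>k\<in>UNIV. g $ k $ m * d k)) \<longlongrightarrow>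
           (\<Sum>k\<in>UNIV. g $ k $ m * p k) + 0 * (\<Sum>k\<in>UNIV. g $ k $ m * d k)) (at_right 0)"
        by (intro tendsto_intros)
      hence "eventually (\<lambda>t. (\<Sum>k\<in>UNIV. g $ k $ m * p k) + t * (\<Sum>k\<in>UNIV. g $ k $ m * d k) < Gam m) (at_right 0)"
        using True order_tendstoD(2) by fastforce
      thus ?thesis by eventually_elim (simp add: eq)
    next
      case False
      hence neg: "(\<Sum>k\<in>UNIV. g $ k $ m * d k) \<le> 0" using cm by auto
      have "(\<Sum>k\<in>UNIV. g $ k $ m * p k) \<le> Gam m" using fp by (simp add: feasible_def)
      show ?thesis using e2
      proof eventually_elim
        case (elim t)
        have "t * (\<Sum>k\<in>UNIV. g $ k $ m * d k) \<le> 0" using elim neg by (simp add: mult_nonneg_nonpos)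
        thus ?case using \<open>(\<Sum>k\<in>UNIV. g $ k $ m * p k) \<le> Gam m\<close> by (simp add: eq)
      qed
    qed
  qed
  have "eventually (\<lambda>t. \<forall>k. p k + t * d k \<ge> 0) (at_right 0)" by (rule eventually_all_finite) (rule A)
  moreover have "eventually (\<lambda>t. \<forall>m. (\<Sum>k\<in>UNIV. g $ k $ m * (p k + t * d k)) \<le> Gam m) (at_right 0)"
    by (rule eventually_all_finite) (rule B)
  ultimately show ?thesis by eventually_elim (simp add: feasible_def)
qed



lemma sum_single: fixes i :: "'k::finite" shows "(\<Sum>k\<in>UNIV. f k * single i c k) = f i * c"
proof -
  have "(\<Sum>k\<in>UNIV. f k * single i c k) = (\<Sum>k\<in>UNIV. if k = i then f i * c else 0)"
    by (rule sum.cong) (auto simp: single_def)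
  also have "\<dots> = f i * c" by simp
  finally show ?thesis .
qed

lemma nzg: "\<forall>k m. g $ k $ m > (0::real) \<Longrightarrow> g $ k $ m \<noteq> 0" by (metis less_irrefl)
lemma nzh: "\<forall>k. h $ k > (0::real) \<Longrightarrow> h $ k \<noteq> 0" by (metis less_irrefl)

lemma argmin_iff:
  assumes "\<forall>k m. g $ k $ m > 0"
  shows "is_argmin_ratio g Gam i m' \<longleftrightarrow> (\<forall>m. Gam m' / g $ i $ m' \<le> Gam m / g $ i $ m)"
proof -
  have "\<And>k m. g $ k $ m \<noteq> 0" using assms by (metis less_irrefl)
  thus ?thesis by (simp add: is_argmin_ratio_def ediv_def)
qed

lemma condA_iff:
  assumes hpos: "\<forall>k. h $ k > 0" and gpos: "\<forall>k m. g $ k $ m > 0" and lnn: "\<forall>k. lam k \<ge> 0"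
  shows "condA h g lam Gam i m' \<longleftrightarrow> lam i > 0 \<and> 1 / lam i - 1 / h $ i \<le> Gam m' / g $ i $ m'
       \<and> (\<forall>j. j \<noteq> i \<longrightarrow> h $ j * lam i \<le> lam j * h $ i)"
proof (cases "lam i = 0")
  case True
  then show ?thesis using hpos gpos nzg[OF gpos] nzh[OF hpos] by (simp add: condA_def einv_def ediv_def)
next
  case False
  hence li: "lam i > 0" using lnn by (metis order_le_less)
  have "(ediv (h $ j) (lam j) \<le> ediv (h $ i) (lam i)) \<longleftrightarrow> h $ j * lam i \<le> lam j * h $ i" for j
  proof (cases "lam j = 0")
    case True
    then show ?thesis using hpos[rule_format, of j] li by (simp add: ediv_def not_le mult_pos_pos)
  next
    case False
    hence "lam j > 0" using lnn by (metis order_le_less)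
    then show ?thesis using hpos li by (simp add: ediv_def divide_simps mult.commute)
  qed
  then show ?thesis using li hpos gpos nzg[OF gpos] nzh[OF hpos] by (simp add: condA_def einv_def ediv_def)
qed

lemma condB_iff:
  assumes hpos: "\<forall>k. h $ k > 0" and gpos: "\<forall>k m. g $ k $ m > 0" and lnn: "\<forall>k. lam k \<ge> 0"
  shows "condB h g lam Gam i m' \<longleftrightarrow> (lam i = 0 \<or> 1 / lam i - 1 / h $ i > Gam m' / g $ i $ m')
       \<and> (\<forall>j. j \<noteq> i \<longrightarrow>
        (h $ j * g $ i $ m' - h $ i * g $ j $ m') * (g $ i $ m' / (g $ i $ m' + h $ i * Gam m'))
          \<le> lam j * g $ i $ m' - lam i * g $ j $ m')"
proof (cases "lam i = 0")
  case True
  then show ?thesis using hpos gpos nzg[OF gpos] nzh[OF hpos] by (simp add: condB_def einv_def ediv_def)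
next
  case False
  then show ?thesis using hpos gpos nzg[OF gpos] nzh[OF hpos] by (simp add: condB_def einv_def ediv_def)
qed



lemma single_nonneg: "c \<ge> 0 \<Longrightarrow> single i c k \<ge> 0" by (simp add: single_def)

lemma feasible_single:
  fixes i :: "'k::finite" and g :: "real^'m::finite^'k"
  assumes gpos: "\<forall>k m. g $ k $ m > 0" and c0: "c \<ge> 0"
    and le: "\<forall>m. c \<le> Gam m / g $ i $ m"
  shows "feasible g Gam (single i c)"
  unfolding feasible_def
proof (intro conjI allI)
  fix m
  have "g $ i $ m > 0" using gpos by simp
  hence "c * g $ i $ m \<le> Gam m" using le[rule_format, of m] by (simp add: pos_le_divide_eq)
  moreover have "(\<Sum>k\<in>UNIV. g $ k $ m * single i c k) = g $ i $ m * c" by (rule sum_single)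
  ultimately show "(\<Sum>k\<in>UNIV. g $ k $ m * single i c k) \<le> Gam m" by (simp add: mult.commute)
qed (use c0 in \<open>simp add: single_nonneg\<close>)

lemma SS_single: "SS h (single i c) = 1 + h $ i * c" by (simp add: SS_def sum_single)

lemma suffA:
  fixes i :: "'k::finite" and g :: "real^'m::finite^'k" and h :: "real^'k"
  assumes hpos: "\<forall>k. h $ k > 0" and gpos: "\<forall>k m. g $ k $ m > 0" and Gpos: "\<forall>m. Gam m > 0"
    and lnn: "\<forall>k. lam k \<ge> 0"
    and am: "\<forall>m. Gam m' / g $ i $ m' \<le> Gam m / g $ i $ m"
    and li: "lam i > 0" and c0le: "1 / lam i - 1 / h $ i \<le> Gam m' / g $ i $ m'"
    and rat: "\<forall>j. j \<noteq> i \<longrightarrow> h $ j * lam i \<le> lam j * h $ i"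
  shows "optimal h g lam Gam (single i (max 0 (1 / lam i - 1 / h $ i)))"
proof -
  define c0 where "c0 = 1 / lam i - 1 / h $ i"
  define c where "c = max 0 c0"
  define p where "p = single i c"
  have hi: "h $ i > 0" using hpos by simp
  have R0: "Gam m' / g $ i $ m' > 0" using Gpos gpos by simp
  have fp: "feasible g Gam p" unfolding p_def
  proof (rule feasible_single[OF gpos])
    show "0 \<le> c" by (simp add: c_def)
    have "c \<le> Gam m' / g $ i $ m'" using c0le R0 by (simp add: c_def c0_def)
    thus "\<forall>m. c \<le> Gam m / g $ i $ m" using am order_trans by blast
  qed
  have s: "SS h p = 1 + h $ i * c" by (simp add: p_def SS_single)
  have sge: "SS h p \<ge> h $ i / lam i"
  proof (cases "c0 \<le> 0")
    case True
    hence "1 / lam i \<le> 1 / h $ i" by (simp add: c0_def)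
    hence "h $ i \<le> lam i" using li hi by (simp add: divide_simps)
    thus ?thesis using True li by (simp add: s c_def)
  next
    case False
    thus ?thesis using li hi by (simp add: s c_def c0_def field_simps)
  qed
  have spos: "SS h p > 0" using sge li hi by (smt (verit) divide_pos_pos)
  show ?thesis unfolding c0_def[symmetric] c_def[symmetric] p_def[symmetric]
  proof (rule suff)
    show "\<forall>k. h $ k \<ge> 0" using hpos by (simp add: less_imp_le)
    show "feasible g Gam p" by (rule fp)
    show "\<forall>q. feasible g Gam q \<longrightarrow> (\<Sum>k\<in>UNIV. DD h lam p k * (q k - p k)) \<le> 0"
    proof (intro allI impI sum_nonpos)
      fix q k assume fq: "feasible g Gam q"
      have qk: "q k \<ge> 0" using fq by (simp add: feasible_def)
      show "DD h lam p k * (q k - p k) \<le> 0"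
      proof (cases "k = i")
        case True
        show ?thesis
        proof (cases "c0 \<le> 0")
          case c: True
          hence "1 / lam i \<le> 1 / h $ i" by (simp add: c0_def)
          hence "h $ i \<le> lam i" using li hi by (simp add: divide_simps)
          moreover have "p k = 0" using c True by (simp add: p_def single_def c_def)
          moreover have "SS h p = 1" using c by (simp add: s c_def)
          ultimately show ?thesis using qk True by (simp add: DD_def mult_nonpos_nonneg)
        next
          case c: False
          have "SS h p = h $ i / lam i" using c li hi by (simp add: s c_def c0_def field_simps)
          hence "DD h lam p i = 0" using li hi by (simp add: DD_def)
          thus ?thesis using True by simp
        qed
      next
        case False
        have pk: "p k = 0" using False by (simp add: p_def single_def)
        have hk: "h $ k > 0" using hpos by simp
        have "h $ k / SS h p \<le> h $ k / (h $ i / lam i)"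
          using sge hk li hi spos by (intro divide_left_mono) (auto intro: mult_pos_pos divide_pos_pos)
        also have "\<dots> = h $ k * lam i / h $ i" by simp
        also have "\<dots> \<le> lam k" using rat False hi by (simp add: divide_simps)
        finally have "DD h lam p k \<le> 0" by (simp add: DD_def)
        thus ?thesis using pk qk by (simp add: mult_nonpos_nonneg)
      qed
    qed
  qed
qed

lemma suffB:
  fixes i :: "'k::finite" and g :: "real^'m::finite^'k" and h :: "real^'k"
  assumes hpos: "\<forall>k. h $ k > 0" and gpos: "\<forall>k m. g $ k $ m > 0" and Gpos: "\<forall>m. Gam m > 0"
    and lnn: "\<forall>k. lam k \<ge> 0"
    and am: "\<forall>m. Gam m' / g $ i $ m' \<le> Gam m / g $ i $ m"
    and c0: "lam i = 0 \<or> 1 / lam i - 1 / h $ i > Gam m' / g $ i $ m'"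
    and ineq: "\<forall>j. j \<noteq> i \<longrightarrow>
        (h $ j * g $ i $ m' - h $ i * g $ j $ m') * (g $ i $ m' / (g $ i $ m' + h $ i * Gam m'))
          \<le> lam j * g $ i $ m' - lam i * g $ j $ m'"
  shows "optimal h g lam Gam (single i (Gam m' / g $ i $ m'))"
proof -
  define R where "R = Gam m' / g $ i $ m'"
  define p where "p = single i R"
  define G where "G = g $ i $ m'"
  have hi: "h $ i > 0" using hpos by simp
  have G0: "G > 0" using gpos by (simp add: G_def)
  have R0: "R > 0" using Gpos gpos by (simp add: R_def)
  have fp: "feasible g Gam p" unfolding p_def
    by (rule feasible_single[OF gpos]) (use am R0 in \<open>auto simp: R_def\<close>)
  have s: "SS h p = 1 + h $ i * R" by (simp add: p_def SS_single)
  have spos: "SS h p > 0" using s hi R0 by (simp add: add_pos_pos)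
  have sG: "G / (G + h $ i * Gam m') = 1 / SS h p"
    using G0 hi Gpos by (simp add: s R_def G_def[symmetric] field_simps)
  have Di: "DD h lam p i \<ge> 0"
  proof (cases "lam i = 0")
    case True thus ?thesis using hi spos by (simp add: DD_def)
  next
    case False
    hence li: "lam i > 0" using lnn by (metis order_le_less)
    hence "1 / lam i - 1 / h $ i > R" using c0 False by (simp add: R_def)
    hence "1 / lam i > (1 + h $ i * R) / h $ i" using hi by (simp add: field_simps)
    hence "h $ i / (1 + h $ i * R) > lam i" using li hi spos s
      by (simp add: field_simps)
    thus ?thesis by (simp add: DD_def s)
  qed
  have Dj: "DD h lam p j * G \<le> DD h lam p i * g $ j $ m'" if "j \<noteq> i" for j
  proof -
    have "(h $ j * G - h $ i * g $ j $ m') * (1 / SS h p) \<le> lam j * G - lam i * g $ j $ m'"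
      using ineq that by (simp add: G_def[symmetric] sG)
    thus ?thesis by (simp add: DD_def algebra_simps)
  qed
  show ?thesis unfolding R_def[symmetric] p_def[symmetric]
  proof (rule suff)
    show "\<forall>k. h $ k \<ge> 0" using hpos by (simp add: less_imp_le)
    show "feasible g Gam p" by (rule fp)
    show "\<forall>q. feasible g Gam q \<longrightarrow> (\<Sum>k\<in>UNIV. DD h lam p k * (q k - p k)) \<le> 0"
    proof (intro allI impI)
      fix q assume fq: "feasible g Gam q"
      have trm: "G * (DD h lam p k * (q k - p k)) \<le> DD h lam p i * (g $ k $ m' * q k - g $ k $ m' * p k)" for k
      proof (cases "k = i")
        case True thus ?thesis by (simp add: G_def algebra_simps)
      next
        case False
        have pk: "p k = 0" using False by (simp add: p_def single_def)
        have qk: "q k \<ge> 0" using fq by (simp add: feasible_def)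
        have "G * (DD h lam p k * q k) = (DD h lam p k * G) * q k" by simp
        also have "\<dots> \<le> (DD h lam p i * g $ k $ m') * q k" using Dj[OF False] qk by (rule mult_right_mono)
        finally show ?thesis using pk by (simp add: algebra_simps)
      qed
      have "G * (\<Sum>k\<in>UNIV. DD h lam p k * (q k - p k)) = (\<Sum>k\<in>UNIV. G * (DD h lam p k * (q k - p k)))"
        by (simp add: sum_distrib_left)
      also have "\<dots> \<le> (\<Sum>k\<in>UNIV. DD h lam p i * (g $ k $ m' * q k - g $ k $ m' * p k))"
        by (rule sum_mono) (rule trm)
      also have "\<dots> = DD h lam p i * ((\<Sum>k\<in>UNIV. g $ k $ m' * q k) - (\<Sum>k\<in>UNIV. g $ k $ m' * p k))"
        by (simp add: right_diff_distrib sum_distrib_left sum_subtractf)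
      also have "(\<Sum>k\<in>UNIV. g $ k $ m' * p k) = Gam m'"
        using G0 by (simp add: p_def sum_single R_def G_def)
      also have "DD h lam p i * ((\<Sum>k\<in>UNIV. g $ k $ m' * q k) - Gam m') \<le> 0"
        using Di fq by (intro mult_nonneg_nonpos) (auto simp: feasible_def)
      finally show "(\<Sum>k\<in>UNIV. DD h lam p k * (q k - p k)) \<le> 0"
        using G0 by (simp add: mult_le_0_iff)
    qed
  qed
qed



lemma ex_argmin: fixes f :: "'m::finite \<Rightarrow> real" shows "\<exists>m'. \<forall>m. f m' \<le> f m"
proof -
  have "Min (range f) \<in> range f" by (rule Min_in) auto
  then obtain m' where "f m' = Min (range f)" by (metis imageE)
  hence "\<forall>m. f m' \<le> f m" using Min_le[of "range f"] by auto
  thus ?thesis by blast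
qed

lemma ex_argmax: fixes f :: "'m::finite \<Rightarrow> real" shows "\<exists>m'. \<forall>m. f m \<le> f m'"
proof -
  have "Max (range f) \<in> range f" by (rule Max_in) auto
  then obtain m' where "f m' = Max (range f)" by (metis imageE)
  hence "\<forall>m. f m \<le> f m'" using Max_ge[of "range f"] by auto
  thus ?thesis by blast
qed

lemma nec2:
  assumes hnn: "\<forall>k. h $ k \<ge> 0" and opt: "optimal h g lam Gam p"
    and dk: "\<forall>k. d k \<ge> 0 \<or> p k > 0"
    and cm: "\<forall>m. (\<Sum>k\<in>UNIV. g $ k $ m * p k) < Gam m \<or> (\<Sum>k\<in>UNIV. g $ k $ m * d k) \<le> 0"
  shows "(\<Sum>k\<in>UNIV. DD h lam p k * d k) \<le> 0"
  using opt by (intro nec[OF hnn opt] feas_ev dk cm) (simp add: optimal_def)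

lemma condA_from_D:
  fixes i :: "'k::finite"
  assumes hpos: "\<forall>k. h $ k > 0" and p: "p = single i c" and c: "c \<ge> 0"
    and Di: "DD h lam p i = 0" and Dj: "\<forall>j. j \<noteq> i \<longrightarrow> DD h lam p j \<le> 0"
  shows "lam i > 0 \<and> 1 / lam i - 1 / h $ i = c \<and> (\<forall>j. j \<noteq> i \<longrightarrow> h $ j * lam i \<le> lam j * h $ i)"
proof -
  have hi: "h $ i > 0" using hpos by simp
  have s: "SS h p = 1 + h $ i * c" by (simp add: p SS_single)
  have spos: "SS h p > 0" using s hi c by (smt (verit) mult_nonneg_nonneg)
  have li: "lam i = h $ i / SS h p" using Di by (simp add: DD_def)
  have lpos: "lam i > 0" using li hi spos by simp
  have "1 / lam i = SS h p / h $ i" using li by simp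
  also have "\<dots> = 1 / h $ i + c" using hi by (simp add: s field_simps)
  finally have c0: "1 / lam i - 1 / h $ i = c" by simp
  have "h $ j * lam i \<le> lam j * h $ i" if "j \<noteq> i" for j
  proof -
    have "h $ j / SS h p \<le> lam j" using Dj that by (simp add: DD_def)
    moreover have "h $ j / SS h p = h $ j * lam i / h $ i" using li hi spos by (simp add: field_simps)
    ultimately show ?thesis using hi by (simp add: divide_simps)
  qed
  thus ?thesis using lpos c0 by blast
qed

lemma sum_single_dir: fixes i :: "'k::finite"
  shows "(\<Sum>k\<in>UNIV. f k * (single j a k + single i b k)) = f j * a + f i * b"
  by (simp add: distrib_left sum.distrib sum_single)

lemma necAll:
  fixes g :: "real^'m::finite^'k::finite" and h :: "real^'k"
  assumes hpos: "\<forall>k. h $ k > 0" and gpos: "\<forall>k m. g $ k $ m > 0" and Gpos: "\<forall>m. Gam m > 0"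
    and lnn: "\<forall>k. lam k \<ge> 0"
    and dist: "\<forall>k m n. m \<noteq> n \<longrightarrow> Gam n * g $ k $ m \<noteq> Gam m * g $ k $ n"
    and opt: "optimal h g lam Gam p" and crd: "card {k. p k > 0} \<le> 1"
  shows "\<exists>i m'. (\<forall>m. Gam m' / g $ i $ m' \<le> Gam m / g $ i $ m) \<and>
    ((lam i > 0 \<and> 1 / lam i - 1 / h $ i \<le> Gam m' / g $ i $ m'
       \<and> (\<forall>j. j \<noteq> i \<longrightarrow> h $ j * lam i \<le> lam j * h $ i)) \<or>
     ((lam i = 0 \<or> 1 / lam i - 1 / h $ i > Gam m' / g $ i $ m')
       \<and> (\<forall>j. j \<noteq> i \<longrightarrow>
        (h $ j * g $ i $ m' - h $ i * g $ j $ m') * (g $ i $ m' / (g $ i $ m' + h $ i * Gam m'))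
          \<le> lam j * g $ i $ m' - lam i * g $ j $ m')))"
proof -
  have hnn: "\<forall>k. h $ k \<ge> 0" using hpos by (simp add: less_imp_le)
  have fp: "feasible g Gam p" using opt by (simp add: optimal_def)
  have pnn: "\<forall>k. p k \<ge> 0" using fp by (simp add: feasible_def)
  show ?thesis
  proof (cases "\<forall>k. p k = 0")
    case True
    have s1: "SS h p = 1" using True by (simp add: SS_def)
    have hl: "h $ k \<le> lam k" for k
    proof -
      have "(\<Sum>k'\<in>UNIV. DD h lam p k' * single k 1 k') \<le> 0"
        by (rule nec2[OF hnn opt]) (use True Gpos in \<open>auto simp: single_def\<close>)
      thus ?thesis by (simp add: sum_single DD_def s1)
    qed
    have lpos: "lam k > 0" for k using hl[of k] hpos by (metis order_less_le_trans)
    obtain i where imax: "\<forall>j. h $ j / lam j \<le> h $ i / lam i" using ex_argmax[of "\<lambda>j. h $ j / lam j"] by blast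
    obtain m' where am: "\<forall>m. Gam m' / g $ i $ m' \<le> Gam m / g $ i $ m" using ex_argmin[of "\<lambda>m. Gam m / g $ i $ m"] by blast
    have "1 / lam i - 1 / h $ i \<le> 0" using hl[of i] hpos[rule_format, of i] lpos[of i]
      by (simp add: divide_simps)
    also have "0 \<le> Gam m' / g $ i $ m'" using Gpos gpos by (simp add: less_imp_le)
    finally have A1: "1 / lam i - 1 / h $ i \<le> Gam m' / g $ i $ m'" .
    have A2: "h $ j * lam i \<le> lam j * h $ i" for j
      using imax[rule_format, of j] lpos[of i] lpos[of j] by (simp add: divide_simps mult.commute)
    show ?thesis using am A1 A2 lpos by blast
  next
    case False
    then obtain i where "p i \<noteq> 0" by blast
    hence pi: "p i > 0" using pnn by (metis order_le_less)
    have pj: "p j = 0" if "j \<noteq> i" for j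
    proof (rule ccontr)
      assume "p j \<noteq> 0"
      hence "p j > 0" using pnn by (metis order_le_less)
      hence "{i, j} \<subseteq> {k. p k > 0}" using pi by auto
      hence "card {i, j} \<le> card {k. p k > 0}" by (intro card_mono) auto
      thus False using crd that by simp
    qed
    define c where "c = p i"
    have p: "p = single i c" using pj by (auto simp: single_def c_def)
    have c0: "c > 0" using pi by (simp add: c_def)
    obtain m' where am: "\<forall>m. Gam m' / g $ i $ m' \<le> Gam m / g $ i $ m" using ex_argmin[of "\<lambda>m. Gam m / g $ i $ m"] by blast
    define R where "R = Gam m' / g $ i $ m'"
    define G where "G = g $ i $ m'"
    have G0: "G > 0" using gpos by (simp add: G_def)
    have hi: "h $ i > 0" using hpos by simp
    have sumgp: "(\<Sum>k\<in>UNIV. g $ k $ m * p k) = g $ i $ m * c" for m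
      by (simp add: p sum_single)
    have cR: "c \<le> R"
    proof -
      have "g $ i $ m' * c \<le> Gam m'" using fp sumgp[of m'] unfolding feasible_def by metis
      thus ?thesis using G0 by (simp add: R_def G_def pos_le_divide_eq mult.commute)
    qed
    have s: "SS h p = 1 + h $ i * c" by (simp add: p SS_single)
    have spos: "SS h p > 0" using s hi c0 by (simp add: add_pos_pos)
    have Dige: "DD h lam p i \<ge> 0"
    proof -
      have "(\<Sum>k\<in>UNIV. DD h lam p k * single i (-1) k) \<le> 0"
      proof (rule nec2[OF hnn opt])
        show "\<forall>k. 0 \<le> single i (- 1) k \<or> 0 < p k" using pi by (auto simp: single_def)
        show "\<forall>m. (\<Sum>k\<in>UNIV. g $ k $ m * p k) < Gam m \<or> (\<Sum>k\<in>UNIV. g $ k $ m * single i (- 1) k) \<le> 0"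
          using gpos by (simp add: sum_single less_imp_le)
      qed
      thus ?thesis by (simp add: sum_single)
    qed
    show ?thesis
    proof (cases "c < R")
      case True
      have slack: "(\<Sum>k\<in>UNIV. g $ k $ m * p k) < Gam m" for m
      proof -
        have "c < Gam m / g $ i $ m" using True am by (simp add: R_def) (meson order_less_le_trans)
        hence "c * g $ i $ m < Gam m" using gpos[rule_format, of i m] by (simp add: pos_less_divide_eq)
        thus ?thesis by (metis sumgp mult.commute)
      qed
      have Dj: "DD h lam p j \<le> 0" for j
      proof -
        have "(\<Sum>k\<in>UNIV. DD h lam p k * single j 1 k) \<le> 0"
          by (rule nec2[OF hnn opt]) (use slack in \<open>auto simp: single_def\<close>)
        thus ?thesis by (simp add: sum_single)
      qed
      have "DD h lam p i = 0" using Dj[of i] Dige by simp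
      from condA_from_D[OF hpos p less_imp_le[OF c0] this] Dj
      have "lam i > 0 \<and> 1 / lam i - 1 / h $ i = c \<and> (\<forall>j. j \<noteq> i \<longrightarrow> h $ j * lam i \<le> lam j * h $ i)"
        by blast
      thus ?thesis using am cR by (auto simp: R_def)
    next
      case False
      hence cR': "c = R" using cR by simp
      have slack: "(\<Sum>k\<in>UNIV. g $ k $ m * p k) < Gam m" if "m \<noteq> m'" for m
      proof -
        have "R \<le> Gam m / g $ i $ m" using am by (simp add: R_def)
        moreover have "R \<noteq> Gam m / g $ i $ m"
          using dist[rule_format, of m m' i] that gpos[rule_format, of i m] gpos[rule_format, of i m']
          by (auto simp: R_def field_simps)
        ultimately have "c < Gam m / g $ i $ m" using cR' by simp
        hence "c * g $ i $ m < Gam m" using gpos[rule_format, of i m] by (simp add: pos_less_divide_eq)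
        thus ?thesis by (metis sumgp mult.commute)
      qed
      have Dj: "DD h lam p j * G \<le> DD h lam p i * g $ j $ m'" if "j \<noteq> i" for j
      proof -
        define r where "r = g $ j $ m' / G"
        have "(\<Sum>k\<in>UNIV. DD h lam p k * (single j 1 k + single i (-r) k)) \<le> 0"
        proof (rule nec2[OF hnn opt])
          show "\<forall>k. 0 \<le> single j 1 k + single i (- r) k \<or> 0 < p k"
            using pi that by (auto simp: single_def)
          show "\<forall>m. (\<Sum>k\<in>UNIV. g $ k $ m * p k) < Gam m \<or>
              (\<Sum>k\<in>UNIV. g $ k $ m * (single j 1 k + single i (- r) k)) \<le> 0"
          proof
            fix m show "(\<Sum>k\<in>UNIV. g $ k $ m * p k) < Gam m \<or>
              (\<Sum>k\<in>UNIV. g $ k $ m * (single j 1 k + single i (- r) k)) \<le> 0"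
            proof (cases "m = m'")
              case True
              thus ?thesis using G0 by (simp add: sum_single_dir r_def G_def)
            qed (simp add: slack)
          qed
        qed
        hence "DD h lam p j - DD h lam p i * r \<le> 0" by (simp add: sum_single_dir)
        hence "DD h lam p j \<le> DD h lam p i * g $ j $ m' / G" by (simp add: r_def)
        thus ?thesis using G0 by (simp add: pos_le_divide_eq)
      qed
      show ?thesis
      proof (cases "DD h lam p i = 0")
        case True
        have "\<forall>j. j \<noteq> i \<longrightarrow> DD h lam p j \<le> 0"
          using Dj True G0 by (metis mult_zero_left mult_le_0_iff not_less)
        from condA_from_D[OF hpos p less_imp_le[OF c0] True this]
        have "lam i > 0 \<and> 1 / lam i - 1 / h $ i = c \<and> (\<forall>j. j \<noteq> i \<longrightarrow> h $ j * lam i \<le> lam j * h $ i)"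
          by blast
        thus ?thesis using am cR by (auto simp: R_def)
      next
        case False
        hence Dpos: "DD h lam p i > 0" using Dige by simp
        have B1: "lam i = 0 \<or> 1 / lam i - 1 / h $ i > R"
        proof (cases "lam i = 0")
          case False
          hence li: "lam i > 0" using lnn by (metis order_le_less)
          have "h $ i / SS h p > lam i" using Dpos by (simp add: DD_def)
          hence "SS h p / h $ i < 1 / lam i" using li hi spos by (simp add: field_simps)
          moreover have "SS h p / h $ i = 1 / h $ i + R" using hi by (simp add: s cR' field_simps)
          ultimately show ?thesis by simp
        qed simp
        have sG: "G / (G + h $ i * Gam m') = 1 / SS h p"
          using G0 hi Gpos by (simp add: s cR' R_def G_def[symmetric] field_simps)
        have B2: "(h $ j * G - h $ i * g $ j $ m') * (G / (G + h $ i * Gam m'))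
          \<le> lam j * G - lam i * g $ j $ m'" if "j \<noteq> i" for j
        proof -
          have "(h $ j * G - h $ i * g $ j $ m') * (1 / SS h p) \<le> lam j * G - lam i * g $ j $ m'"
            using Dj[OF that] by (simp add: DD_def algebra_simps)
          thus ?thesis by (simp only: sG)
        qed
        show ?thesis using am B1 B2 by (auto simp: R_def G_def)
      qed
    qed
  qed
qed



lemma card_single: fixes i :: "'k::finite" shows "card {k. single i c k > 0} \<le> 1"
proof -
  have "{k. single i c k > 0} \<subseteq> {i}" by (auto simp: single_def split: if_splits)
  hence "card {k. single i c k > 0} \<le> card {i}" by (intro card_mono) auto
  thus ?thesis by simp
qed

lemma pointwise:
  fixes g :: "real^'m::finite^'k::finite" and h :: "real^'k"
  assumes hpos: "\<forall>k. h $ k > 0" and gpos: "\<forall>k m. g $ k $ m > 0" and Gpos: "\<forall>m. Gam m > 0"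
    and lnn: "\<forall>k. lam k \<ge> 0"
    and dist: "\<forall>k m n. m \<noteq> n \<longrightarrow> Gam n * g $ k $ m \<noteq> Gam m * g $ k $ n"
  shows "((\<exists>p. optimal h g lam Gam p \<and> card {k. p k > 0} \<le> 1) \<longleftrightarrow>
        (\<exists>i m'. is_argmin_ratio g Gam i m' \<and> (condA h g lam Gam i m' \<or> condB h g lam Gam i m')))
     \<and> (\<forall>i m'. is_argmin_ratio g Gam i m' \<and> condA h g lam Gam i m' \<longrightarrow>
          optimal h g lam Gam (single i (max 0 (1 / lam i - 1 / h $ i))))
     \<and> (\<forall>i m'. is_argmin_ratio g Gam i m' \<and> condB h g lam Gam i m' \<longrightarrow>
          optimal h g lam Gam (single i (Gam m' / g $ i $ m')))"
proof -
  have C2: "\<forall>i m'. is_argmin_ratio g Gam i m' \<and> condA h g lam Gam i m' \<longrightarrow>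
          optimal h g lam Gam (single i (max 0 (1 / lam i - 1 / h $ i)))"
  proof (intro allI impI)
    fix i m' assume a: "is_argmin_ratio g Gam i m' \<and> condA h g lam Gam i m'"
    show "optimal h g lam Gam (single i (max 0 (1 / lam i - 1 / h $ i)))"
      using a unfolding argmin_iff[OF gpos] condA_iff[OF hpos gpos lnn]
      by (intro suffA[OF hpos gpos Gpos lnn]) auto
  qed
  have C3: "\<forall>i m'. is_argmin_ratio g Gam i m' \<and> condB h g lam Gam i m' \<longrightarrow>
          optimal h g lam Gam (single i (Gam m' / g $ i $ m'))"
  proof (intro allI impI)
    fix i m' assume a: "is_argmin_ratio g Gam i m' \<and> condB h g lam Gam i m'"
    show "optimal h g lam Gam (single i (Gam m' / g $ i $ m'))"
      using a unfolding argmin_iff[OF gpos] condB_iff[OF hpos gpos lnn]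
      by (intro suffB[OF hpos gpos Gpos lnn]) auto
  qed
  have C1: "(\<exists>p. optimal h g lam Gam p \<and> card {k. p k > 0} \<le> 1) \<longleftrightarrow>
        (\<exists>i m'. is_argmin_ratio g Gam i m' \<and> (condA h g lam Gam i m' \<or> condB h g lam Gam i m'))"
  proof
    assume "\<exists>p. optimal h g lam Gam p \<and> card {k. p k > 0} \<le> 1"
    then obtain p where "optimal h g lam Gam p" "card {k. p k > 0} \<le> 1" by blast
    from necAll[OF hpos gpos Gpos lnn dist this] show
      "\<exists>i m'. is_argmin_ratio g Gam i m' \<and> (condA h g lam Gam i m' \<or> condB h g lam Gam i m')"
      unfolding argmin_iff[OF gpos] condA_iff[OF hpos gpos lnn] condB_iff[OF hpos gpos lnn] .
  next
    assume "\<exists>i m'. is_argmin_ratio g Gam i m' \<and> (condA h g lam Gam i m' \<or> condB h g lam Gam i m')"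
    then obtain i m' where "is_argmin_ratio g Gam i m'" "condA h g lam Gam i m' \<or> condB h g lam Gam i m'"
      by blast
    thus "\<exists>p. optimal h g lam Gam p \<and> card {k. p k > 0} \<le> 1"
      using C2 C3 card_single by blast
  qed
  show ?thesis using C1 C2 C3 by blast
qed

lemma inner_g1:
  fixes x :: "(real^'k::finite) \<times> (real^'m::finite^'k)"
  shows "((0::real^'k), axis k (axis m 1)) \<bullet> x = snd x $ k $ m"
  by (cases x) (simp add: inner_axis')

theorem theorem3p2:
  fixes \<mu> :: "((real^'k::finite) \<times> (real^'m::finite^'k)) measure"
    and lam :: "'k \<Rightarrow> real" and Gam :: "'m \<Rightarrow> real"
  assumes "prob_space \<mu>"
    and "sets \<mu> = sets borel"
    and "absolutely_continuous lborel \<mu>"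
    and "AE \<alpha> in \<mu>. (\<forall>k. fst \<alpha> $ k \<ge> 0) \<and> (\<forall>k m. snd \<alpha> $ k $ m \<ge> 0)"
    and "\<forall>k. lam k \<ge> 0"
    and "\<forall>m. Gam m > 0"
  shows "AE \<alpha> in \<mu>. (case \<alpha> of (h, g) \<Rightarrow>
     ((\<exists>p. optimal h g lam Gam p \<and> card {k. p k > 0} \<le> 1) \<longleftrightarrow>
        (\<exists>i m'. is_argmin_ratio g Gam i m' \<and> (condA h g lam Gam i m' \<or> condB h g lam Gam i m')))
     \<and> (\<forall>i m'. is_argmin_ratio g Gam i m' \<and> condA h g lam Gam i m' \<longrightarrow>
          optimal h g lam Gam (single i (max 0 (1 / lam i - 1 / h $ i))))
     \<and> (\<forall>i m'. is_argmin_ratio g Gam i m' \<and> condB h g lam Gam i m' \<longrightarrow>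
          optimal h g lam Gam (single i (Gam m' / g $ i $ m'))))"
proof -
  note ac = assms(3)
  have A1: "AE \<alpha> in \<mu>. \<forall>k\<in>UNIV. fst \<alpha> $ k \<noteq> 0"
  proof (rule AE_finite_allI, simp)
    fix k :: 'k
    have "(axis k (1::real), 0::real^'m^'k) \<noteq> 0" by (simp add: zero_prod_def axis_eq_0_iff)
    from hyp_AE[OF ac this] show "AE \<alpha> in \<mu>. fst \<alpha> $ k \<noteq> 0" by (simp add: inner_h)
  qed
  have A2: "AE \<alpha> in \<mu>. \<forall>k\<in>UNIV. \<forall>m\<in>UNIV. snd \<alpha> $ k $ m \<noteq> 0"
  proof (rule AE_finite_allI, simp, rule AE_finite_allI, simp)
    fix k :: 'k and m :: 'm
    have "(0::real^'k, axis k (axis m (1::real))) \<noteq> 0" by (simp add: zero_prod_def axis_eq_0_iff)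
    from hyp_AE[OF ac this] show "AE \<alpha> in \<mu>. snd \<alpha> $ k $ m \<noteq> 0" by (simp add: inner_g1)
  qed
  have A3: "AE \<alpha> in \<mu>. \<forall>k\<in>UNIV. \<forall>m\<in>UNIV. \<forall>n\<in>UNIV.
      m \<noteq> n \<longrightarrow> Gam n * snd \<alpha> $ k $ m \<noteq> Gam m * snd \<alpha> $ k $ n"
  proof (rule AE_finite_allI, simp, rule AE_finite_allI, simp, rule AE_finite_allI, simp)
    fix k :: 'k and m n :: 'm
    show "AE \<alpha> in \<mu>. m \<noteq> n \<longrightarrow> Gam n * snd \<alpha> $ k $ m \<noteq> Gam m * snd \<alpha> $ k $ n"
    proof (cases "m = n")
      case False
      have "axis m (Gam n) - axis n (Gam m) \<noteq> 0"
      proof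
        assume "axis m (Gam n) - axis n (Gam m) = 0"
        hence "(axis m (Gam n) - axis n (Gam m)) $ m = 0" by simp
        thus False using False assms(6) by (simp add: axis_def) (metis less_irrefl)
      qed
      hence "(0::real^'k, axis k (axis m (Gam n) - axis n (Gam m))) \<noteq> 0"
        by (simp add: zero_prod_def axis_eq_0_iff)
      from hyp_AE[OF ac this] show ?thesis by (simp add: inner_g)
    qed simp
  qed
  show ?thesis using assms(4) A1 A2 A3
  proof eventually_elim
    case (elim \<alpha>)
    obtain h g where a: "\<alpha> = (h, g)" by (cases \<alpha>)
    have hpos: "\<forall>k. h $ k > 0" using elim a by (auto simp: order_le_less)
    have gpos: "\<forall>k m. g $ k $ m > 0" using elim a by (auto simp: order_le_less)
    have dist: "\<forall>k m n. m \<noteq> n \<longrightarrow> Gam n * g $ k $ m \<noteq> Gam m * g $ k $ n" using elim a by auto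
    show ?case unfolding a using pointwise[OF hpos gpos assms(6) assms(5) dist] by simp
  qed
qed

end
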